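(* Let $n\in\mathbb{Z}_{++}$, let $G=[g_{ij}]\in\mathbb{R}_+^{n\times n}$ be an entrywise nonnegative matrix, and let $\alpha,p\in\mathbb{R}$ with $\alpha\ge p$, $\beta\in[0,1)$ and $\delta\in(0,1)$. Assume the spectral radius of $G$ satisfies $\rho(G)\le \Lambda_{\max}$ for some $0<\Lambda_{\max}<\frac{1}{\delta(1+\beta)}$. For seeding vectors $\bar{\mathbf s},\underline{\mathbf s}\in\mathbb{R}^n_+$ define the sequences $\bar{\mathbf x}(k),\underline{\mathbf x}(k)\in\mathbb{R}^n$, $k\in\mathbb{Z}_+$, by $\bar{\mathbf x}(0)=\bar{\mathbf s}$, $\underline{\mathbf x}(0)=\underline{\mathbf s}$ and $$\bar{\mathbf x}(k+1)=(\alpha-p)\mathbf 1_n+G\bar{\mathbf x}(k)+\beta G\underline{\mathbf x}(k),\qquad \underline{\mathbf x}(k+1)=(\alpha-p)\mathbf 1_n+G\underline{\mathbf x}(k)+\beta G\bar{\mathbf x}(k),$$ and define the utilities $$\bar{\mathfrak U}(\bar{\mathbf s},\underline{\mathbf s})=p\sum_{k=0}^{\infty}\delta^k\mathbf 1_n^\top\bar{\mathbf x}(k)-\tfrac12\|\bar{\mathbf s}\|_2^2,\qquad \underline{\mathfrak U}(\bar{\mathbf s},\underline{\mathbf s})=p\sum_{k=0}^{\infty}\delta^k\mathbf 1_n^\top\underline{\mathbf x}(k)-\tfrac12\|\underline{\mathbf s}\|_2^2.$$ Let $\mathbf c=[c_1,\dots,c_n]^\top=\tfrac12\big(I_n-\delta(1-\beta)G^\top\big)^{-1}\mathbf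 1_n+\tfrac12\big(I_n-\delta(1+\beta)G^\top\big)^{-1}\mathbf 1_n$. Then for every $i\in[n]$, $$\frac{\partial\bar{\mathfrak U}}{\partial\bar s_i}=p\,c_i-\bar s_i,\qquad \frac{\partial\underline{\mathfrak U}}{\partial\underline s_i}=p\,c_i-\underline s_i.$$
   Context: $\mathbf 1_n$ is the all-ones vector in $\mathbb{R}^n$, $[n]=\{1,\dots,n\}$. The vector $(I_n-aG^\top)^{-1}\mathbf 1_n$ is the Katz–Bonacich centrality of $G$ with attenuation factor $a$. Interpretation: $\bar x_i(k)$ and $\underline x_i(k)$ are agent $i$'s consumption of the products of firm $a$ and firm $b$ at time $k$, and $\bar{\mathbf s},\underline{\mathbf s}$ are the two firms' seedings. *)

theory Defs
  imports "HOL-Analysis.Analysis"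
begin

definition cmat :: "real^'n^'n \<Rightarrow> complex^'n^'n" where
  "cmat G = (\<chi> i j. complex_of_real (G $ i $ j))"

definition eigenvalues :: "real^'n^'n \<Rightarrow> complex set" where
  "eigenvalues G = {l. \<exists>v::complex^'n. v \<noteq> 0 \<and> cmat G *v v = l *s v}"

definition spectral_radius :: "real^'n^'n \<Rightarrow> real" where
  "spectral_radius G = Sup (cmod ` eigenvalues G)"

definition ones :: "real^'n" where
  "ones = (\<chi> i. 1)"

fun traj :: "real^'n^'n \<Rightarrow> real \<Rightarrow> real \<Rightarrow> real \<Rightarrow> real^'n \<Rightarrow> real^'n \<Rightarrow> nat
             \<Rightarrow> (real^'n) \<times> (real^'n)" where
  "traj G \<alpha> p \<beta> sb su 0 = (sb, su)"
| "traj G \<alpha> p \<beta> sb su (Suc k) =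
     (let xb = fst (traj G \<alpha> p \<beta> sb su k); xu = snd (traj G \<alpha> p \<beta> sb su k) in
      ((\<alpha> - p) *\<^sub>R ones + G *v xb + \<beta> *\<^sub>R (G *v xu),
       (\<alpha> - p) *\<^sub>R ones + G *v xu + \<beta> *\<^sub>R (G *v xb)))"

definition xbar where "xbar G \<alpha> p \<beta> sb su k = fst (traj G \<alpha> p \<beta> sb su k)"
definition xund where "xund G \<alpha> p \<beta> sb su k = snd (traj G \<alpha> p \<beta> sb su k)"

definition Ubar :: "real^'n^'n \<Rightarrow> real \<Rightarrow> real \<Rightarrow> real \<Rightarrow> real \<Rightarrow> real^'n \<Rightarrow> real^'n \<Rightarrow> real" where
  "Ubar G \<alpha> p \<beta> \<delta> sb su =
     p * (\<Sum>k. \<delta> ^ k * (ones \<bullet> xbar G \<alpha> p \<beta> sb su k)) - (1/2) * (norm sb)\<^sup>2"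

definition Uund :: "real^'n^'n \<Rightarrow> real \<Rightarrow> real \<Rightarrow> real \<Rightarrow> real \<Rightarrow> real^'n \<Rightarrow> real^'n \<Rightarrow> real" where
  "Uund G \<alpha> p \<beta> \<delta> sb su =
     p * (\<Sum>k. \<delta> ^ k * (ones \<bullet> xund G \<alpha> p \<beta> sb su k)) - (1/2) * (norm su)\<^sup>2"

definition cvec :: "real^'n^'n \<Rightarrow> real \<Rightarrow> real \<Rightarrow> real^'n" where
  "cvec G \<beta> \<delta> =
     (1/2) *\<^sub>R (matrix_inv (mat 1 - (\<delta> * (1 - \<beta>)) *\<^sub>R transpose G) *v ones)
   + (1/2) *\<^sub>R (matrix_inv (mat 1 - (\<delta> * (1 + \<beta>)) *\<^sub>R transpose G) *v ones)"

end

theory Submission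
  imports Defs Jordan_Normal_Form.Spectral_Radius
begin

no_notation vec_index (infixl "$" 100)
no_notation scalar_prod (infix "\<bullet>" 70)
hide_const (open) Matrix.mat Matrix.vec Spectral_Radius.spectral_radius Matrix.row Matrix.col

definition mpow :: "real^'n^'n \<Rightarrow> nat \<Rightarrow> real^'n^'n" where
  "mpow M k = ((\<lambda>X. M ** X) ^^ k) (mat 1)"

lemma mpow_0[simp]: "mpow M 0 = mat 1" by (simp add: mpow_def)
lemma mpow_Suc: "mpow M (Suc k) = M ** mpow M k" by (simp add: mpow_def)

lemma mpow_Suc_v: "mpow M (Suc k) *v v = M *v (mpow M k *v v)"
  by (simp add: mpow_Suc matrix_vector_mul_assoc)

lemma mpow_scale: "mpow (c *\<^sub>R M) k = (c^k) *\<^sub>R mpow M k"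
proof (induction k)
  case 0 then show ?case by simp
next
  case (Suc k)
  then show ?case by (simp add: mpow_Suc matrix_scalar_ac scalar_matrix_assoc[symmetric])
qed

definition decay :: "real^'n^'n \<Rightarrow> bool" where
  "decay M \<longleftrightarrow> (\<exists>C q. 0 < q \<and> q < 1 \<and> (\<forall>k v. norm (mpow M k *v v) \<le> C * q^k * norm v))"

lemma decay_tendsto:
  assumes "decay M" shows "(\<lambda>k. mpow M k *v v) \<longlonglongrightarrow> 0"
proof -
  obtain C q where q: "0 < q" "q < 1" and b: "\<And>k v. norm (mpow M k *v v) \<le> C * q^k * norm v"
    using assms unfolding decay_def by blast
  have "(\<lambda>k. q^k) \<longlonglongrightarrow> 0" by (rule LIMSEQ_power_zero) (use q in auto)
  then have g0: "(\<lambda>k. C * q^k * norm v) \<longlonglongrightarrow> 0"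
    by (intro tendsto_mult_left_zero tendsto_mult_right_zero)
  have ev: "eventually (\<lambda>k. norm (mpow M k *v v) \<le> C * q^k * norm v) sequentially"
    by (intro always_eventually allI b)
  show ?thesis
    by (rule Lim_null_comparison[OF ev g0])
qed

lemma decay_inv:
  fixes M :: "real^'n^'n"
  assumes "decay M" shows "invertible (mat 1 - transpose M)"
proof -
  have "inj ((*v) (mat 1 - M))"
  proof (rule injI)
    fix x y assume "(mat 1 - M) *v x = (mat 1 - M) *v y"
    then have e: "M *v (x - y) = x - y"
      by (simp add: algebra_simps)
    have "mpow M k *v (x - y) = x - y" for k
      by (induction k) (simp_all add: mpow_Suc_v e)
    with decay_tendsto[OF assms, of "x - y"] have "(\<lambda>k. x - y) \<longlonglongrightarrow> 0" by simp
    then show "x = y" by (simp add: LIMSEQ_const_iff)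
  qed
  then obtain B where "B ** (mat 1 - M) = mat 1"
    using matrix_left_invertible_injective by blast
  moreover have "mat 1 - M = transpose (mat 1 - transpose M)"
    by (simp add: Finite_Cartesian_Product.transpose_def Finite_Cartesian_Product.vec_eq_iff Finite_Cartesian_Product.mat_def)
  ultimately have "\<exists>B. (mat 1 - transpose M) ** B = mat 1"
    using left_invertible_transpose by metis
  then show ?thesis
    using matrix_left_right_inverse unfolding invertible_def by blast
qed

lemma decay_neumann:
  fixes M :: "real^'n^'n"
  assumes "decay M"
  shows "(\<lambda>k. ones \<bullet> (mpow M k *v e)) sums ((matrix_inv (mat 1 - transpose M) *v ones) \<bullet> e)"
proof -
  define X where "X = mat 1 - transpose M"
  have "invertible X" using decay_inv[OF assms] by (simp add: X_def)
  then have XX: "X ** matrix_inv X = mat 1"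
    unfolding invertible_def matrix_inv_def by (rule someI_ex[THEN conjunct1])
  define y where "y = matrix_inv X *v ones"
  have Xy: "X *v y = ones" by (simp add: y_def matrix_vector_mul_assoc XX)
  have tX: "X = transpose (mat 1 - M)"
    by (simp add: X_def Finite_Cartesian_Product.transpose_def Finite_Cartesian_Product.vec_eq_iff Finite_Cartesian_Product.mat_def)
  define h where "h k = y \<bullet> (mpow M k *v e)" for k
  have eq: "ones \<bullet> (mpow M k *v e) = h k - h (Suc k)" for k
  proof -
    have "ones \<bullet> (mpow M k *v e) = (y v* (mat 1 - M)) \<bullet> (mpow M k *v e)"
      using Xy tX by simp
    also have "\<dots> = y \<bullet> ((mat 1 - M) *v (mpow M k *v e))"
      by (rule dot_lmul_matrix)
    also have "\<dots> = h k - h (Suc k)"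
      by (simp add: h_def mpow_Suc_v algebra_simps inner_diff_right)
    finally show ?thesis .
  qed
  have "h \<longlonglongrightarrow> y \<bullet> 0"
    unfolding h_def by (intro tendsto_intros decay_tendsto[OF assms])
  then have "(\<lambda>k. h k - h (Suc k)) sums (h 0 - 0)"
    using telescope_sums' by force
  then show ?thesis
    by (simp add: eq h_def y_def X_def)
qed


lemma summable_n_power:
  fixes r :: real assumes "0 \<le> r" "r < 1"
  shows "summable (\<lambda>k. real k * r^k)"
proof -
  define s where "s = sqrt r"
  have s: "0 \<le> s" "s < 1" using assms by (auto simp: s_def real_sqrt_lt_1_iff)
  have r: "r = s^2" using assms by (simp add: s_def)
  have "(\<lambda>k. of_nat k * s^k) \<longlonglongrightarrow> (0::real)"
    by (rule powser_times_n_limit_0) (use s in auto)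
  then have "eventually (\<lambda>k. norm (of_nat k * s^k) < (1::real)) sequentially"
    by (rule order_tendstoD[OF tendsto_norm, simplified]) simp
  then have "eventually (\<lambda>k. norm (real k * r^k) \<le> s^k) sequentially"
  proof (rule eventually_mono)
    fix k assume "norm (of_nat k * s^k) < (1::real)"
    then have "real k * s^k \<le> 1" using s by simp
    then have le: "(real k * s^k) * s^k \<le> 1 * s^k"
      by (rule mult_right_mono) (use s in simp)
    have "r^k = (s^k)^2" by (simp add: r power_mult[symmetric] mult.commute[of 2])
    then have "real k * r^k = (real k * s^k) * s^k" by (simp add: power2_eq_square mult.assoc)
    also note le
    finally have "real k * r^k \<le> s^k" by simp
    then show "norm (real k * r^k) \<le> s^k" using assms by simp
  qed
  moreover have "summable (\<lambda>k. s^k)" by (rule summable_geometric) (use s in simp)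
  ultimately show ?thesis by (rule summable_comparison_test_ev)
qed

lemma mv_sum: "finite S \<Longrightarrow> (M::real^'n^'n) *v (\<Sum>j\<in>S. f j) = (\<Sum>j\<in>S. M *v f j)"
  by (induction S rule: finite_induct) (simp_all add: matrix_vector_right_distrib)

lemma iter_closed:
  fixes M :: "real^'n^'n"
  assumes "\<And>k. z (Suc k) = b k + M *v z k"
  shows "z k = mpow M k *v z 0 + (\<Sum>j<k. mpow M (k - Suc j) *v b j)"
proof (induction k)
  case 0 then show ?case by simp
next
  case (Suc k)
  have "z (Suc k) = b k + M *v (mpow M k *v z 0 + (\<Sum>j<k. mpow M (k - Suc j) *v b j))"
    using assms Suc by simp
  also have "\<dots> = b k + mpow M (Suc k) *v z 0 + (\<Sum>j<k. mpow M (Suc k - Suc j) *v b j)"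
  proof -
    have "(\<Sum>j<k. M *v (mpow M (k - Suc j) *v b j)) = (\<Sum>j<k. mpow M (Suc k - Suc j) *v b j)"
    proof (rule sum.cong)
      fix j assume "j \<in> {..<k}"
      then have "Suc k - Suc j = Suc (k - Suc j)" by auto
      then show "M *v (mpow M (k - Suc j) *v b j) = mpow M (Suc k - Suc j) *v b j"
        by (simp add: mpow_Suc_v)
    qed simp
    then show ?thesis
      by (simp add: matrix_vector_right_distrib mv_sum mpow_Suc_v)
  qed
  also have "\<dots> = mpow M (Suc k) *v z 0 + (\<Sum>j<Suc k. mpow M (Suc k - Suc j) *v b j)"
    by simp
  finally show ?case .
qed

lemma iter_summable:
  fixes M :: "real^'n^'n"
  assumes "decay M" "\<And>k. z (Suc k) = b k + M *v z k"
    and "\<And>j. norm (b j) \<le> B * d ^ Suc j" "0 \<le> d" "d < 1" and B: "0 \<le> B"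
  shows "summable (\<lambda>k. norm (z k))"
proof -
  obtain C q where q: "0 < q" "q < 1" and cb: "\<And>k v. norm (mpow M k *v v) \<le> C * q^k * norm v"
    using assms(1) unfolding decay_def by blast
  define r where "r = max q d"
  have r: "0 \<le> r" "r < 1" "q \<le> r" "d \<le> r" using q assms by (auto simp: r_def)
  have cb': "norm (mpow M k *v v) \<le> \<bar>C\<bar> * r^k * norm v" for k v
  proof -
    have qr: "q^k \<le> r^k" by (rule power_mono) (use q r in auto)
    have "C * q^k \<le> \<bar>C\<bar> * q^k" by (rule mult_right_mono) (use q in auto)
    also have "\<dots> \<le> \<bar>C\<bar> * r^k" by (rule mult_left_mono[OF qr]) simp
    finally have "C * q^k * norm v \<le> \<bar>C\<bar> * r^k * norm v"
      by (rule mult_right_mono) simp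
    then show ?thesis using cb[of k v] by linarith
  qed
  have bound: "norm (z k) \<le> \<bar>C\<bar> * norm (z 0) * r^k + \<bar>C\<bar> * B * (real k * r^k)" for k
  proof -
    have zk: "z k = mpow M k *v z 0 + (\<Sum>j<k. mpow M (k - Suc j) *v b j)"
      by (rule iter_closed[of z b M k, OF assms(2)])
    have "norm (z k) \<le> norm (mpow M k *v z 0) + norm (\<Sum>j<k. mpow M (k - Suc j) *v b j)"
      unfolding zk by (rule norm_triangle_ineq)
    also have "\<dots> \<le> \<bar>C\<bar> * r^k * norm (z 0) + (\<Sum>j<k. \<bar>C\<bar> * B * r^k)"
    proof (intro add_mono cb' order.trans[OF norm_sum] sum_mono)
      fix j assume j: "j \<in> {..<k}"
      have "norm (mpow M (k - Suc j) *v b j) \<le> \<bar>C\<bar> * r^(k - Suc j) * norm (b j)" by (rule cb')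
      also have "\<dots> \<le> \<bar>C\<bar> * r^(k - Suc j) * (B * r ^ Suc j)"
      proof (intro mult_left_mono)
        show "norm (b j) \<le> B * r ^ Suc j"
          using assms(3)[of j] mult_left_mono[OF power_mono[OF r(4) assms(4)] B, of "Suc j"] by linarith
      qed (use r in auto)
      also have "\<dots> = \<bar>C\<bar> * B * r^k"
      proof -
        have "r^(k - Suc j) * r ^ Suc j = r^(k - Suc j + Suc j)" by (rule power_add[symmetric])
        also have "k - Suc j + Suc j = k" using j by simp
        finally have "r^(k - Suc j) * r ^ Suc j = r^k" .
        then show ?thesis by (simp add: algebra_simps)
      qed
      finally show "norm (mpow M (k - Suc j) *v b j) \<le> \<bar>C\<bar> * B * r^k" .
    qed
    finally show ?thesis by (simp add: algebra_simps)
  qed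
  show ?thesis
  proof (rule summable_comparison_test_ev)
    show "eventually (\<lambda>k. norm (norm (z k)) \<le> \<bar>C\<bar> * norm (z 0) * r^k + \<bar>C\<bar> * B * (real k * r^k)) sequentially"
      using bound by simp
    show "summable (\<lambda>k. \<bar>C\<bar> * norm (z 0) * r^k + \<bar>C\<bar> * B * (real k * r^k))"
      by (intro summable_add summable_mult summable_geometric summable_n_power) (use r in auto)
  qed
qed


lemma traj_swap: "traj G \<alpha> p \<beta> su sb k = prod.swap (traj G \<alpha> p \<beta> sb su k)"
  by (induction k) (simp_all add: Let_def)

lemma Uund_swap: "Uund G \<alpha> p \<beta> \<delta> sb su = Ubar G \<alpha> p \<beta> \<delta> su sb"
  unfolding Uund_def Ubar_def xund_def xbar_def
  by (simp add: traj_swap[of G \<alpha> p \<beta> sb su])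

lemma xbar_Suc: "xbar G \<alpha> p \<beta> sb su (Suc k) =
   (\<alpha> - p) *\<^sub>R ones + G *v xbar G \<alpha> p \<beta> sb su k + \<beta> *\<^sub>R (G *v xund G \<alpha> p \<beta> sb su k)"
  by (simp add: xbar_def xund_def Let_def)

lemma xund_Suc: "xund G \<alpha> p \<beta> sb su (Suc k) =
   (\<alpha> - p) *\<^sub>R ones + G *v xund G \<alpha> p \<beta> sb su k + \<beta> *\<^sub>R (G *v xbar G \<alpha> p \<beta> sb su k)"
  by (simp add: xbar_def xund_def Let_def)

lemma pert:
  "xbar G \<alpha> p \<beta> (sb + t *\<^sub>R e) su k = xbar G \<alpha> p \<beta> sb su k + (t/2 * ((1+\<beta>)^k + (1-\<beta>)^k)) *\<^sub>R (mpow G k *v e)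
 \<and> xund G \<alpha> p \<beta> (sb + t *\<^sub>R e) su k = xund G \<alpha> p \<beta> sb su k + (t/2 * ((1+\<beta>)^k - (1-\<beta>)^k)) *\<^sub>R (mpow G k *v e)"
proof (induction k)
  case 0 then show ?case by (simp add: xbar_def xund_def)
next
  case (Suc k)
  define a where "a = t/2 * ((1+\<beta>)^k + (1-\<beta>)^k)"
  define b where "b = t/2 * ((1+\<beta>)^k - (1-\<beta>)^k)"
  define P where "P = mpow G k *v e"
  have GP: "mpow G (Suc k) *v e = G *v P" by (simp add: P_def mpow_Suc_v)
  have ab1: "a + \<beta> * b = t/2 * ((1+\<beta>)^Suc k + (1-\<beta>)^Suc k)"
    by (simp add: a_def b_def algebra_simps)
  have ab2: "b + \<beta> * a = t/2 * ((1+\<beta>)^Suc k - (1-\<beta>)^Suc k)"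
    by (simp add: a_def b_def algebra_simps)
  have IH1: "xbar G \<alpha> p \<beta> (sb + t *\<^sub>R e) su k = xbar G \<alpha> p \<beta> sb su k + a *\<^sub>R P"
    using Suc.IH by (simp add: a_def P_def)
  have IH2: "xund G \<alpha> p \<beta> (sb + t *\<^sub>R e) su k = xund G \<alpha> p \<beta> sb su k + b *\<^sub>R P"
    using Suc.IH by (simp add: b_def P_def)
  show ?case
    unfolding xbar_Suc[of G \<alpha> p \<beta> "sb + t *\<^sub>R e"] xund_Suc[of G \<alpha> p \<beta> "sb + t *\<^sub>R e"] IH1 IH2
      xbar_Suc[of G \<alpha> p \<beta> sb] xund_Suc[of G \<alpha> p \<beta> sb] GP ab1[symmetric] ab2[symmetric]
    by (simp add: algebra_simps scaleR_add_left)
qed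

lemma base_summable:
  fixes G :: "real^'n^'n"
  assumes d1: "decay ((\<delta> * (1 + \<beta>)) *\<^sub>R G)" and d2: "decay ((\<delta> * (1 - \<beta>)) *\<^sub>R G)"
    and "0 \<le> \<delta>" "\<delta> < 1"
  shows "summable (\<lambda>k. \<delta>^k * (ones \<bullet> xbar G \<alpha> p \<beta> sb su k))"
proof -
  define xb where "xb = xbar G \<alpha> p \<beta> sb su"
  define xu where "xu = xund G \<alpha> p \<beta> sb su"
  define z where "z k = \<delta>^k *\<^sub>R (xb k + xu k)" for k
  define w where "w k = \<delta>^k *\<^sub>R (xb k - xu k)" for k
  define M1 where "M1 = (\<delta> * (1 + \<beta>)) *\<^sub>R G"
  define M2 where "M2 = (\<delta> * (1 - \<beta>)) *\<^sub>R G"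
  have zS: "z (Suc k) = (2 * (\<alpha> - p) * \<delta>^Suc k) *\<^sub>R ones + M1 *v z k" for k
  proof -
    have h: "xb (Suc k) + xu (Suc k) = ((\<alpha> - p) *\<^sub>R ones + (\<alpha> - p) *\<^sub>R ones) + (1 + \<beta>) *\<^sub>R (G *v (xb k + xu k))"
      by (simp add: xb_def xu_def xbar_Suc xund_Suc algebra_simps scaleR_add_left)
    have two: "(\<alpha> - p) *\<^sub>R ones + (\<alpha> - p) *\<^sub>R ones = (2 * (\<alpha> - p)) *\<^sub>R (ones::real^'n)"
      by (metis mult_2 scaleR_add_left)
    have "z (Suc k) = \<delta>^Suc k *\<^sub>R ((2 * (\<alpha> - p)) *\<^sub>R ones) + \<delta>^Suc k *\<^sub>R ((1 + \<beta>) *\<^sub>R (G *v (xb k + xu k)))"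
      unfolding z_def h two scaleR_add_right ..
    also have "\<delta>^Suc k *\<^sub>R ((2 * (\<alpha> - p)) *\<^sub>R ones) = (2 * (\<alpha> - p) * \<delta>^Suc k) *\<^sub>R (ones::real^'n)"
      by (simp only: scaleR_scaleR mult.commute)
    also have "\<delta>^Suc k *\<^sub>R ((1 + \<beta>) *\<^sub>R (G *v (xb k + xu k))) = M1 *v z k"
      by (simp add: M1_def z_def scaleR_matrix_vector_assoc[symmetric] matrix_vector_mult_scaleR mult_ac)
    finally show ?thesis .
  qed
  have wS: "w (Suc k) = 0 + M2 *v w k" for k
  proof -
    have h: "xb (Suc k) - xu (Suc k) = (1 - \<beta>) *\<^sub>R (G *v (xb k - xu k))"
      by (simp add: xb_def xu_def xbar_Suc xund_Suc algebra_simps scaleR_diff_left)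
    have "w (Suc k) = \<delta>^Suc k *\<^sub>R ((1 - \<beta>) *\<^sub>R (G *v (xb k - xu k)))"
      unfolding w_def h ..
    also have "\<dots> = M2 *v w k"
      by (simp add: M2_def w_def scaleR_matrix_vector_assoc[symmetric] matrix_vector_mult_scaleR mult_ac)
    finally show ?thesis by simp
  qed
  have sz: "summable (\<lambda>k. norm (z k))"
  proof (rule iter_summable[of M1 z "\<lambda>k. (2 * (\<alpha> - p) * \<delta>^Suc k) *\<^sub>R ones", OF d1[folded M1_def] zS])
    show "norm ((2 * (\<alpha> - p) * \<delta>^Suc j) *\<^sub>R (ones::real^'n)) \<le> (\<bar>2 * (\<alpha> - p)\<bar> * norm (ones::real^'n)) * \<delta> ^ Suc j" for j
      using assms by (simp add: abs_mult mult_ac)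
  qed (use assms in auto)
  have sw: "summable (\<lambda>k. norm (w k))"
    by (rule iter_summable[of M2 w "\<lambda>k. 0" 0 \<delta>, OF d2[folded M2_def] wS]) (use assms in auto)
  have eq: "\<delta>^k * (ones \<bullet> xb k) = ones \<bullet> ((1/2) *\<^sub>R (z k + w k))" for k
  proof -
    have "(xb k + xu k) + (xb k - xu k) = xb k + xb k" by (simp add: algebra_simps)
    also have "\<dots> = 2 *\<^sub>R xb k" by (rule scaleR_2[symmetric])
    finally have "z k + w k = \<delta>^k *\<^sub>R (2 *\<^sub>R xb k)"
      unfolding z_def w_def scaleR_add_right[symmetric] by simp
    then have "(1/2) *\<^sub>R (z k + w k) = \<delta>^k *\<^sub>R xb k" by simp
    then show ?thesis by (simp add: inner_scaleR_right)
  qed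
  show ?thesis
  proof (rule summable_comparison_test_ev)
    show "eventually (\<lambda>k. norm (\<delta>^k * (ones \<bullet> xbar G \<alpha> p \<beta> sb su k)) \<le> norm (ones::real^'n) * (norm (z k) + norm (w k))) sequentially"
    proof (rule always_eventually, rule allI)
      fix k
      have "norm (\<delta>^k * (ones \<bullet> xb k)) \<le> norm (ones::real^'n) * norm ((1/2) *\<^sub>R (z k + w k))"
        unfolding eq real_norm_def by (rule Cauchy_Schwarz_ineq2)
      also have "\<dots> \<le> norm (ones::real^'n) * (norm (z k) + norm (w k))"
      proof (rule mult_left_mono)
        have "norm (z k + w k) \<le> norm (z k) + norm (w k)" by (rule norm_triangle_ineq)
        moreover have "0 \<le> norm (z k)" "0 \<le> norm (w k)" by simp_all
        moreover have "norm ((1/2) *\<^sub>R (z k + w k)) = norm (z k + w k) / 2" by simp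
        ultimately show "norm ((1/2) *\<^sub>R (z k + w k)) \<le> norm (z k) + norm (w k)" by linarith
      qed simp
      finally show "norm (\<delta>^k * (ones \<bullet> xbar G \<alpha> p \<beta> sb su k)) \<le> norm (ones::real^'n) * (norm (z k) + norm (w k))"
        by (simp add: xb_def)
    qed
    show "summable (\<lambda>k. norm (ones::real^'n) * (norm (z k) + norm (w k)))"
      by (intro summable_mult summable_add sz sw)
  qed
qed


lemma main_bar:
  fixes G :: "real^'n^'n"
  assumes d1: "decay ((\<delta> * (1 + \<beta>)) *\<^sub>R G)" and d2: "decay ((\<delta> * (1 - \<beta>)) *\<^sub>R G)"
    and "0 \<le> \<delta>" "\<delta> < 1"
  shows "((\<lambda>t. Ubar G \<alpha> p \<beta> \<delta> (sb + t *\<^sub>R axis i 1) su)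
                 has_real_derivative (p * cvec G \<beta> \<delta> $ i - sb $ i)) (at 0)"
proof -
  define e :: "real^'n" where "e = axis i 1"
  define M1 where "M1 = (\<delta> * (1 + \<beta>)) *\<^sub>R G"
  define M2 where "M2 = (\<delta> * (1 - \<beta>)) *\<^sub>R G"
  define f where "f k = \<delta>^k * (ones \<bullet> xbar G \<alpha> p \<beta> sb su k)" for k
  define g where "g k = (1/2) * (ones \<bullet> (mpow M1 k *v e)) + (1/2) * (ones \<bullet> (mpow M2 k *v e))" for k
  define y1 where "y1 = matrix_inv (mat 1 - transpose M1) *v ones"
  define y2 where "y2 = matrix_inv (mat 1 - transpose M2) *v ones"
  define D where "D = (1/2) * (y1 \<bullet> e) + (1/2) * (y2 \<bullet> e)"
  define F where "F = suminf f"
  have sf: "f sums F" unfolding F_def f_def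
    by (rule summable_sums, rule base_summable[OF d1 d2]) (use assms in auto)
  have sg: "g sums D" unfolding g_def D_def y1_def y2_def
    by (intro sums_add sums_mult decay_neumann) (use d1 d2 M1_def M2_def in auto)
  have D: "D = cvec G \<beta> \<delta> $ i"
  proof -
    have "y1 \<bullet> e = y1 $ i" "y2 \<bullet> e = y2 $ i" by (simp_all add: e_def inner_axis)
    then show ?thesis
      by (simp add: D_def cvec_def y1_def y2_def M1_def M2_def transpose_scalar)
  qed
  have tm: "\<delta>^k * (ones \<bullet> xbar G \<alpha> p \<beta> (sb + t *\<^sub>R e) su k) = f k + t * g k" for t k
  proof -
    have "\<delta>^k * (ones \<bullet> xbar G \<alpha> p \<beta> (sb + t *\<^sub>R e) su k)
       = f k + \<delta>^k * (t/2 * ((1+\<beta>)^k + (1-\<beta>)^k)) * (ones \<bullet> (mpow G k *v e))"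
      using pert[of G \<alpha> p \<beta> sb t e su k]
      by (simp add: f_def inner_add_right inner_scaleR_right algebra_simps)
    also have "\<dots> = f k + t * g k"
    proof -
      have m1: "mpow M1 k *v e = (\<delta>^k * (1+\<beta>)^k) *\<^sub>R (mpow G k *v e)"
        unfolding M1_def mpow_scale power_mult_distrib by (rule scaleR_matrix_vector_assoc[symmetric])
      have m2: "mpow M2 k *v e = (\<delta>^k * (1-\<beta>)^k) *\<^sub>R (mpow G k *v e)"
        unfolding M2_def mpow_scale power_mult_distrib by (rule scaleR_matrix_vector_assoc[symmetric])
      show ?thesis unfolding g_def m1 m2 inner_scaleR_right by (simp add: algebra_simps)
    qed
    finally show ?thesis .
  qed
  have U: "Ubar G \<alpha> p \<beta> \<delta> (sb + t *\<^sub>R e) su = p * (F + t * D) - (1/2) * ((norm sb)\<^sup>2 + 2 * t * sb $ i + t\<^sup>2)" for t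
  proof -
    have "(\<lambda>k. f k + t * g k) sums (F + t * D)"
      by (intro sums_add sums_mult sf sg)
    then have "(\<Sum>k. \<delta>^k * (ones \<bullet> xbar G \<alpha> p \<beta> (sb + t *\<^sub>R e) su k)) = F + t * D"
      unfolding tm by (rule sums_unique[symmetric])
    moreover have "(norm (sb + t *\<^sub>R e))\<^sup>2 = (norm sb)\<^sup>2 + 2 * t * sb $ i + t\<^sup>2"
    proof -
      have ee: "e \<bullet> e = 1" "sb \<bullet> e = sb $ i" "e \<bullet> sb = sb $ i"
        by (simp_all add: e_def inner_axis inner_axis' inner_axis_axis)
      have "(norm (sb + t *\<^sub>R e))\<^sup>2 = (sb + t *\<^sub>R e) \<bullet> (sb + t *\<^sub>R e)"
        by (rule power2_norm_eq_inner)
      also have "\<dots> = sb \<bullet> sb + t * (sb \<bullet> e) + t * (e \<bullet> sb) + t * t * (e \<bullet> e)"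
        by (simp add: inner_add_left inner_add_right algebra_simps)
      also have "sb \<bullet> sb = (norm sb)\<^sup>2" by (rule power2_norm_eq_inner[symmetric])
      finally show ?thesis unfolding ee by (simp add: power2_eq_square)
    qed
    ultimately show ?thesis unfolding Ubar_def by simp
  qed
  have "((\<lambda>t. p * (F + t * D) - (1/2) * ((norm sb)\<^sup>2 + 2 * t * sb $ i + t\<^sup>2)) has_real_derivative
        (p * D - sb $ i)) (at 0)"
    by (auto intro!: derivative_eq_intros)
  then show ?thesis unfolding U e_def[symmetric] D .
qed

lemma main_both:
  fixes G :: "real^'n^'n"
  assumes d1: "decay ((\<delta> * (1 + \<beta>)) *\<^sub>R G)" and d2: "decay ((\<delta> * (1 - \<beta>)) *\<^sub>R G)"
    and "0 \<le> \<delta>" "\<delta> < 1"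
  shows "\<forall>i. ((\<lambda>t. Ubar G \<alpha> p \<beta> \<delta> (sb + t *\<^sub>R axis i 1) su)
                 has_real_derivative (p * cvec G \<beta> \<delta> $ i - sb $ i)) (at 0)
           \<and> ((\<lambda>t. Uund G \<alpha> p \<beta> \<delta> sb (su + t *\<^sub>R axis i 1))
                 has_real_derivative (p * cvec G \<beta> \<delta> $ i - su $ i)) (at 0)"
  using main_bar[OF assms, of \<alpha> p sb] main_bar[OF assms, of \<alpha> p su] by (simp add: Uund_swap)


definition to_jnf :: "(nat \<Rightarrow> 'n::finite) \<Rightarrow> 'a^'n^'n \<Rightarrow> 'a mat" where
  "to_jnf idx A = Matrix.mat CARD('n) CARD('n) (\<lambda>(a,b). A $ idx a $ idx b)"

lemma to_jnf_carrier: "to_jnf idx (A::'a^'n::finite^'n) \<in> carrier_mat CARD('n) CARD('n)"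
  by (simp add: to_jnf_def)

lemma to_jnf_dim[simp]: "dim_row (to_jnf idx (A::'a^'n::finite^'n)) = CARD('n)" "dim_col (to_jnf idx (A::'a^'n::finite^'n)) = CARD('n)"
  by (simp_all add: to_jnf_def)

lemma to_jnf_index: "a < CARD('n::finite) \<Longrightarrow> b < CARD('n) \<Longrightarrow> to_jnf idx (A::'a^'n^'n) $$ (a,b) = A $ idx a $ idx b"
  by (simp add: to_jnf_def)

lemma to_jnf_mult:
  fixes A B :: "'a::comm_semiring_1^'n::finite^'n"
  assumes bij: "bij_betw idx {0..<CARD('n)} (UNIV::'n set)"
  shows "to_jnf idx (A ** B) = to_jnf idx A * to_jnf idx B"
proof (rule eq_matI)
  fix a b assume a: "a < dim_row (to_jnf idx A * to_jnf idx B)" and b: "b < dim_col (to_jnf idx A * to_jnf idx B)"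
  then have a': "a < CARD('n)" and b': "b < CARD('n)" by (simp_all add: to_jnf_def)
  have "(to_jnf idx A * to_jnf idx B) $$ (a, b) = (\<Sum>l\<in>{0..<CARD('n)}. A $ idx a $ idx l * B $ idx l $ idx b)"
    using a' b' by (simp add: to_jnf_def scalar_prod_def)
  also have "\<dots> = (\<Sum>k\<in>UNIV. A $ idx a $ k * B $ k $ idx b)"
    by (rule sum.reindex_bij_betw[OF bij, of "\<lambda>k. A $ idx a $ k * B $ k $ idx b"])
  also have "\<dots> = to_jnf idx (A ** B) $$ (a, b)"
    using a' b' by (simp add: to_jnf_def matrix_matrix_mult_def)
  finally show "to_jnf idx (A ** B) $$ (a, b) = (to_jnf idx A * to_jnf idx B) $$ (a, b)" ..
qed (simp_all add: to_jnf_def)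

lemma to_jnf_one:
  assumes bij: "bij_betw idx {0..<CARD('n)} (UNIV::'n::finite set)"
  shows "to_jnf idx (mat 1 :: 'a::comm_semiring_1^'n^'n) = 1\<^sub>m CARD('n)"
proof (rule eq_matI)
  fix a b assume "a < dim_row (1\<^sub>m CARD('n) :: 'a mat)" "b < dim_col (1\<^sub>m CARD('n) :: 'a mat)"
  then have a': "a < CARD('n)" and b': "b < CARD('n)" by simp_all
  have "idx a = idx b \<longleftrightarrow> a = b"
    using bij a' b' unfolding bij_betw_def inj_on_def by auto
  then show "to_jnf idx (mat 1 :: 'a^'n^'n) $$ (a, b) = 1\<^sub>m CARD('n) $$ (a, b)"
    using a' b' by (simp add: to_jnf_index Finite_Cartesian_Product.mat_def)
qed (simp_all add: to_jnf_def)

definition gpow :: "'a::comm_semiring_1^'n^'n \<Rightarrow> nat \<Rightarrow> 'a^'n^'n" where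
  "gpow M k = ((\<lambda>X. M ** X) ^^ k) (mat 1)"

lemma gpow_Suc': "gpow M (Suc k) = gpow M k ** M"
proof (induction k)
  case 0 then show ?case by (simp add: gpow_def)
next
  case (Suc k)
  have "gpow M (Suc (Suc k)) = M ** gpow M (Suc k)" by (simp add: gpow_def)
  also have "\<dots> = M ** (gpow M k ** M)" using Suc by simp
  also have "\<dots> = (M ** gpow M k) ** M" by (simp add: matrix_mul_assoc)
  also have "M ** gpow M k = gpow M (Suc k)" by (simp add: gpow_def)
  finally show ?case .
qed

lemma to_jnf_pow:
  assumes bij: "bij_betw idx {0..<CARD('n)} (UNIV::'n::finite set)"
  shows "to_jnf idx (gpow (M::'a::comm_semiring_1^'n^'n) k) = to_jnf idx M ^\<^sub>m k"
proof (induction k)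
  case 0 then show ?case by (simp add: gpow_def to_jnf_one[OF bij])
next
  case (Suc k)
  then show ?case by (simp add: gpow_Suc' to_jnf_mult[OF bij])
qed


lemma jnf_eig:
  fixes B :: "complex^'n::finite^'n"
  assumes bij: "bij_betw idx {0..<CARD('n)} (UNIV::'n set)" and ev: "eigenvalue (to_jnf idx B) \<mu>"
  shows "\<exists>w. w \<noteq> 0 \<and> B *v w = \<mu> *s w"
proof -
  obtain v where v: "v \<in> carrier_vec CARD('n)" "v \<noteq> 0\<^sub>v CARD('n)" "to_jnf idx B *\<^sub>v v = \<mu> \<cdot>\<^sub>v v"
    using ev unfolding eigenvalue_def eigenvector_def by auto
  define \<iota> where "\<iota> = inv_into {0..<CARD('n)} idx"
  have i1: "idx (\<iota> x) = x" for x unfolding \<iota>_def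
    by (rule bij_betw_inv_into_right[OF bij]) simp
  have i2: "\<iota> x < CARD('n)" for x
  proof -
    have "\<iota> x \<in> {0..<CARD('n)}" unfolding \<iota>_def
      by (rule inv_into_into) (use bij in \<open>auto simp: bij_betw_def\<close>)
    then show ?thesis by simp
  qed
  have i3: "a < CARD('n) \<Longrightarrow> \<iota> (idx a) = a" for a unfolding \<iota>_def
    by (rule bij_betw_inv_into_left[OF bij]) simp
  define w where "w = (\<chi> x. vec_index v (\<iota> x))"
  have dv: "dim_vec v = CARD('n)" using v(1) by simp
  obtain a where a: "a < CARD('n)" "vec_index v a \<noteq> 0"
  proof (rule ccontr)
    assume "\<not> thesis"
    then have "\<forall>a < CARD('n). vec_index v a = 0" using that by blast
    then have "v = 0\<^sub>v CARD('n)" using dv by (intro eq_vecI) auto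
    with v(2) show False by simp
  qed
  have "w $ idx a \<noteq> 0" using a i3 by (simp add: w_def)
  then have w0: "w \<noteq> 0" by auto
  have "B *v w = \<mu> *s w"
  proof (subst Finite_Cartesian_Product.vec_eq_iff, rule allI)
    fix x
    have "(B *v w) $ x = (\<Sum>y\<in>UNIV. B $ x $ y * w $ y)"
      by (simp add: matrix_vector_mult_def)
    also have "\<dots> = (\<Sum>l\<in>{0..<CARD('n)}. B $ x $ idx l * w $ idx l)"
      by (rule sum.reindex_bij_betw[OF bij, symmetric])
    also have "\<dots> = (\<Sum>l\<in>{0..<CARD('n)}. B $ x $ idx l * vec_index v l)"
      by (rule sum.cong) (simp_all add: w_def i3)
    also have "\<dots> = vec_index (to_jnf idx B *\<^sub>v v) (\<iota> x)"
      using i2[of x] dv by (simp add: scalar_prod_def to_jnf_index i1)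
    also have "\<dots> = \<mu> * w $ x"
      using i2[of x] dv by (simp add: v(3) w_def)
    finally show "(B *v w) $ x = (\<mu> *s w) $ x" by simp
  qed
  with w0 show ?thesis by blast
qed

lemma eig_bound:
  fixes G :: "real^'n::finite^'n"
  assumes "\<mu> \<in> eigenvalues G"
  shows "cmod \<mu> \<le> (\<Sum>x\<in>UNIV. \<Sum>y\<in>UNIV. \<bar>G $ x $ y\<bar>)"
proof -
  obtain v where v: "v \<noteq> 0" "cmat G *v v = \<mu> *s v"
    using assms unfolding eigenvalues_def by auto
  define m where "m = Max (range (\<lambda>y. cmod (v $ y)))"
  have mge: "cmod (v $ y) \<le> m" for y unfolding m_def by (rule Max_ge) auto
  have "m \<in> range (\<lambda>y. cmod (v $ y))" unfolding m_def by (rule Max_in) auto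
  then obtain i where i: "cmod (v $ i) = m" by auto
  obtain j where "v $ j \<noteq> 0" using v(1) by (auto simp: Finite_Cartesian_Product.vec_eq_iff)
  then have "0 < cmod (v $ j)" by simp
  then have m0: "0 < m" using mge[of j] by linarith
  have "cmod \<mu> * m = cmod ((cmat G *v v) $ i)" using v(2) i by (simp add: norm_mult)
  also have "\<dots> = cmod (\<Sum>y\<in>UNIV. complex_of_real (G $ i $ y) * v $ y)"
    by (simp add: matrix_vector_mult_def cmat_def)
  also have "\<dots> \<le> (\<Sum>y\<in>UNIV. \<bar>G $ i $ y\<bar> * m)"
    by (rule order.trans[OF norm_sum sum_mono]) (simp add: norm_mult mult_left_mono mge)
  also have "\<dots> = (\<Sum>y\<in>UNIV. \<bar>G $ i $ y\<bar>) * m" by (simp add: sum_distrib_right)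
  finally have "cmod \<mu> \<le> (\<Sum>y\<in>UNIV. \<bar>G $ i $ y\<bar>)" using m0 by simp
  also have "\<dots> \<le> (\<Sum>x\<in>UNIV. \<Sum>y\<in>UNIV. \<bar>G $ x $ y\<bar>)"
    by (rule member_le_sum[of i UNIV "\<lambda>x. \<Sum>y\<in>UNIV. \<bar>G $ x $ y\<bar>"]) (auto intro: sum_nonneg)
  finally show ?thesis .
qed

lemma eig_le_sr:
  fixes G :: "real^'n::finite^'n"
  assumes "\<mu> \<in> eigenvalues G"
  shows "cmod \<mu> \<le> spectral_radius G"
  unfolding Defs.spectral_radius_def
proof (rule cSup_upper)
  show "cmod \<mu> \<in> cmod ` eigenvalues G" using assms by simp
  show "bdd_above (cmod ` eigenvalues G)"
    by (rule bdd_aboveI2[where M="\<Sum>x\<in>UNIV. \<Sum>y\<in>UNIV. \<bar>G $ x $ y\<bar>"]) (rule eig_bound)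
qed

lemma eig_scale:
  fixes G :: "real^'n::finite^'n"
  assumes "s \<noteq> 0" "w \<noteq> 0" "cmat (s *\<^sub>R G) *v w = \<mu> *s w"
  shows "\<mu> / complex_of_real s \<in> eigenvalues G"
proof -
  have "cmat (s *\<^sub>R G) *v w = complex_of_real s *s (cmat G *v w)"
    by (simp add: Finite_Cartesian_Product.vec_eq_iff matrix_vector_mult_def cmat_def sum_distrib_left mult.assoc)
  with assms(3) have "complex_of_real s *s (cmat G *v w) = \<mu> *s w" by simp
  then have "cmat G *v w = (\<mu> / complex_of_real s) *s w"
    using assms(1) by (simp add: Finite_Cartesian_Product.vec_eq_iff field_simps)
  with assms(2) show ?thesis unfolding eigenvalues_def by blast
qed


lemma cmat_mult: "cmat (A ** B) = cmat A ** cmat B"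
  by (simp add: cmat_def matrix_matrix_mult_def Finite_Cartesian_Product.vec_eq_iff)

lemma cmat_one: "cmat (mat 1 :: real^'n::finite^'n) = mat 1"
  by (simp add: cmat_def Finite_Cartesian_Product.mat_def Finite_Cartesian_Product.vec_eq_iff)

lemma cmat_gpow: "gpow (cmat R) k = cmat (gpow R k)"
  by (induction k) (simp_all add: gpow_def cmat_one cmat_mult)

lemma mpow_gpow: "mpow M k = gpow M k"
  by (simp add: mpow_def gpow_def)

lemma mat_norm_bound:
  fixes A :: "real^'n::finite^'n"
  assumes K: "\<And>x y. \<bar>A $ x $ y\<bar> \<le> K"
  shows "norm (A *v v) \<le> (real CARD('n) * real CARD('n) * K) * norm v"
proof -
  have row: "\<bar>(A *v v) $ x\<bar> \<le> real CARD('n) * K * norm v" for x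
  proof -
    have "\<bar>(A *v v) $ x\<bar> = \<bar>\<Sum>y\<in>UNIV. A $ x $ y * v $ y\<bar>"
      by (simp add: matrix_vector_mult_def)
    also have "\<dots> \<le> (\<Sum>y\<in>UNIV. \<bar>A $ x $ y\<bar> * \<bar>v $ y\<bar>)"
      by (rule order.trans[OF sum_abs sum_mono]) (simp add: abs_mult)
    also have "\<dots> \<le> (\<Sum>y::'n\<in>UNIV. K * norm v)"
    proof (rule sum_mono)
      fix y
      have K0: "0 \<le> K" using order.trans[OF abs_ge_zero K] by blast
      show "\<bar>A $ x $ y\<bar> * \<bar>v $ y\<bar> \<le> K * norm v"
        by (rule mult_mono[OF K component_le_norm_cart K0 abs_ge_zero])
    qed
    also have "\<dots> = real CARD('n) * K * norm v" by simp
    finally show ?thesis .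
  qed
  have "norm (A *v v) \<le> (\<Sum>x\<in>UNIV. \<bar>(A *v v) $ x\<bar>)" by (rule norm_le_l1_cart)
  also have "\<dots> \<le> (\<Sum>x::'n\<in>UNIV. real CARD('n) * K * norm v)" by (rule sum_mono) (rule row)
  also have "\<dots> = (real CARD('n) * real CARD('n) * K) * norm v" by simp
  finally show ?thesis .
qed

lemma sr_decay:
  fixes G :: "real^'n::finite^'n"
  assumes sr: "spectral_radius G \<le> \<Lambda>" and c: "0 < c" and L: "0 \<le> \<Lambda>" and cL: "c * \<Lambda> < 1"
  shows "decay (c *\<^sub>R G)"
proof -
  define q where "q = (1 + c * \<Lambda>) / 2"
  have cL0: "0 \<le> c * \<Lambda>" using c L by simp
  have q: "0 < q" "q < 1" "c * \<Lambda> < q" unfolding q_def using cL0 cL by (auto simp: mult.commute)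
  define s where "s = c / q"
  have s: "0 < s" using c q by (simp add: s_def)
  define R where "R = s *\<^sub>R G"
  obtain idx :: "nat \<Rightarrow> 'n" where bij: "bij_betw idx {0..<CARD('n)} UNIV"
    using ex_bij_betw_nat_finite[of "UNIV::'n set"] by auto
  define J where "J = to_jnf idx (cmat R)"
  have Jc: "J \<in> carrier_mat CARD('n) CARD('n)" unfolding J_def by (rule to_jnf_carrier)
  have spec: "norm \<mu> < 1" if "\<mu> \<in> spectrum J" for \<mu>
  proof -
    from that have "eigenvalue J \<mu>" by (simp add: spectrum_def)
    then obtain w where w: "w \<noteq> 0" "cmat R *v w = \<mu> *s w"
      using jnf_eig[OF bij] unfolding J_def by blast
    then have "\<mu> / complex_of_real s \<in> eigenvalues G"
      unfolding R_def by (intro eig_scale) (use s in auto)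
    then have "cmod (\<mu> / complex_of_real s) \<le> \<Lambda>" using eig_le_sr sr by (meson order.trans)
    then have "cmod \<mu> \<le> s * \<Lambda>" using s by (simp add: norm_divide field_simps)
    also have "s * \<Lambda> < 1" using q c by (simp add: s_def field_simps)
    finally show ?thesis by simp
  qed
  have fin: "finite (spectrum J)" by (rule card_finite_spectrum(1)[OF Jc])
  have ne: "spectrum J \<noteq> {}" by (rule spectrum_non_empty[OF Jc]) simp
  have "Spectral_Radius.spectral_radius J < 1"
    unfolding Spectral_Radius.spectral_radius_def using fin ne spec by (subst Max_less_iff) auto
  then obtain c0 where c0: "\<And>k. norm_bound (J ^\<^sub>m k) c0"
    using spectral_radius_jnf_norm_bound_less_1_upper_triangular[OF Jc] by blast
  have ent: "\<bar>mpow R k $ x $ y\<bar> \<le> c0" for k x y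
  proof -
    have surj: "idx ` {0..<CARD('n)} = UNIV" using bij by (simp add: bij_betw_def)
    obtain a where a: "a < CARD('n)" "x = idx a" using surj by (metis UNIV_I atLeastLessThan_iff imageE)
    obtain b where b: "b < CARD('n)" "y = idx b" using surj by (metis UNIV_I atLeastLessThan_iff imageE)
    have "J ^\<^sub>m k = to_jnf idx (cmat (mpow R k))"
      unfolding J_def mpow_gpow cmat_gpow[symmetric] by (rule to_jnf_pow[OF bij, symmetric])
    then have "(J ^\<^sub>m k) $$ (a, b) = complex_of_real (mpow R k $ x $ y)"
      using a b by (simp add: to_jnf_index cmat_def)
    moreover have "norm ((J ^\<^sub>m k) $$ (a, b)) \<le> c0"
      using c0[of k] a b Jc unfolding norm_bound_def by auto
    ultimately show ?thesis by simp
  qed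
  have cG: "c *\<^sub>R G = q *\<^sub>R R" using q by (simp add: R_def s_def)
  have "norm (mpow (c *\<^sub>R G) k *v v) \<le> (real CARD('n) * real CARD('n) * c0) * q^k * norm v" for k v
  proof -
    have "norm (mpow (c *\<^sub>R G) k *v v) \<le> (real CARD('n) * real CARD('n) * (q^k * c0)) * norm v"
    proof (rule mat_norm_bound)
      fix x y
      have "\<bar>mpow (c *\<^sub>R G) k $ x $ y\<bar> = q^k * \<bar>mpow R k $ x $ y\<bar>"
        using q by (simp add: cG mpow_scale abs_mult)
      also have "\<dots> \<le> q^k * c0" by (rule mult_left_mono[OF ent]) (use q in simp)
      finally show "\<bar>mpow (c *\<^sub>R G) k $ x $ y\<bar> \<le> q^k * c0" .
    qed
    then show ?thesis by (simp add: mult_ac)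
  qed
  then show ?thesis unfolding decay_def using q by blast
qed


theorem lemma1:
  fixes G :: "real^'n^'n" and \<alpha> p \<beta> \<delta> \<Lambda>max :: real and sb su :: "real^'n"
  assumes "\<forall>i j. G $ i $ j \<ge> 0"
    and "\<alpha> \<ge> p"
    and "0 \<le> \<beta>" and "\<beta> < 1"
    and "0 < \<delta>" and "\<delta> < 1"
    and "spectral_radius G \<le> \<Lambda>max"
    and "0 < \<Lambda>max" and "\<Lambda>max < 1 / (\<delta> * (1 + \<beta>))"
    and "\<forall>i. sb $ i \<ge> 0" and "\<forall>i. su $ i \<ge> 0"
  shows "\<forall>i. ((\<lambda>t. Ubar G \<alpha> p \<beta> \<delta> (sb + t *\<^sub>R axis i 1) su)
                 has_real_derivative (p * cvec G \<beta> \<delta> $ i - sb $ i)) (at 0)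
           \<and> ((\<lambda>t. Uund G \<alpha> p \<beta> \<delta> sb (su + t *\<^sub>R axis i 1))
                 has_real_derivative (p * cvec G \<beta> \<delta> $ i - su $ i)) (at 0)"
proof -
  have b1: "0 < 1 + \<beta>" using assms(3) by simp
  have c1: "0 < \<delta> * (1 + \<beta>)" using assms(5) b1 by simp
  have c2: "0 < \<delta> * (1 - \<beta>)" using assms(4,5) by simp
  have c21: "\<delta> * (1 - \<beta>) \<le> \<delta> * (1 + \<beta>)" using assms(3,5) by simp
  have L1: "\<delta> * (1 + \<beta>) * \<Lambda>max < 1"
    using assms(9) c1 by (simp add: less_divide_eq mult.commute)
  have L2: "\<delta> * (1 - \<beta>) * \<Lambda>max < 1"
    using L1 mult_right_mono[OF c21, of \<Lambda>max] assms(8) by linarith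
  have d1: "decay ((\<delta> * (1 + \<beta>)) *\<^sub>R G)"
    by (rule sr_decay[OF assms(7) c1 _ L1]) (use assms(8) in simp)
  have d2: "decay ((\<delta> * (1 - \<beta>)) *\<^sub>R G)"
    by (rule sr_decay[OF assms(7) c2 _ L2]) (use assms(8) in simp)
  show ?thesis
    by (rule main_both[OF d1 d2]) (use assms(5,6) in auto)
qed

end
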